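(* Let $N\ge1$ and consider pairs $(b,c)\in\mathbb{Z}_{\ge0}^2$ with $b+c\le 2N$. Call $(b',c')\in\mathbb{Z}_{\ge0}^2$ with $b'+c'\le2N$ a neighbor of $(b,c)$, $(b',c')\ne(b,c)$, if either $(b-b')(c-c')\ge0$ and $|b-b'|+|c-c'|\le2$, or $(b-b')(c-c')<0$ and $\max\{|b-b'|,|c-c'|\}\le2$. Define $\chi^2_{TDT}(b,c)=\frac{(b-c)^2}{b+c}$ for $b+c>0$ and $\chi^2_{TDT}(0,0)=0$, and $LS((b,c))=\max_{(b',c')\text{ neighbor of }(b,c)}|\chi^2_{TDT}(b,c)-\chi^2_{TDT}(b',c')|$. Then $LS((b,c))>6$ whenever $$0\le c<\tfrac{b-8}{7}\ \ \lor\ \ 2\le b<\tfrac{c+8}{7}\ \ \lor\ \ 0\le b<\tfrac{c-8}{7}\ \ \lor\ \ 2\le c<\tfrac{b+8}{7}.$$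
   Context: Here $b$ and $c$ are the off-diagonal counts of the $2\times2$ transmission-disequilibrium-test table classifying $2N$ parents of $N$ families (transmitted allele $A_1$/non-transmitted $A_2$ count $b$, transmitted $A_2$/non-transmitted $A_1$ count $c$); neighboring datasets differ in one family, which corresponds to the neighbor relation on $(b,c)$ given in the claim. *)

theory Defs
  imports Main Complex_Main
begin

definition chi2_tdt :: "int \<Rightarrow> int \<Rightarrow> real" where
  "chi2_tdt b c = (if b + c > 0 then (real_of_int (b - c))^2 / real_of_int (b + c) else 0)"

definition tdt_neighbor :: "nat \<Rightarrow> int \<Rightarrow> int \<Rightarrow> int \<Rightarrow> int \<Rightarrow> bool" where
  "tdt_neighbor N b c b' c' \<longleftrightarrow>
     0 \<le> b' \<and> 0 \<le> c' \<and> b' + c' \<le> 2 * int N \<and> (b', c') \<noteq> (b, c) \<and>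
     (((b - b') * (c - c') \<ge> 0 \<and> \<bar>b - b'\<bar> + \<bar>c - c'\<bar> \<le> 2) \<or>
      ((b - b') * (c - c') < 0 \<and> max \<bar>b - b'\<bar> \<bar>c - c'\<bar> \<le> 2))"

definition LS :: "nat \<Rightarrow> int \<Rightarrow> int \<Rightarrow> real" where
  "LS N b c = Max {\<bar>chi2_tdt b c - chi2_tdt b' c'\<bar> | b' c'. tdt_neighbor N b c b' c'}"

end

theory Submission
  imports Defs
begin

lemma LS_gt:
  assumes "tdt_neighbor N b c b' c'" and "\<bar>chi2_tdt b c - chi2_tdt b' c'\<bar> > 6"
  shows "LS N b c > 6"
proof -
  let ?S = "{\<bar>chi2_tdt b c - chi2_tdt b' c'\<bar> | b' c'. tdt_neighbor N b c b' c'}"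
  have "?S \<subseteq> (\<lambda>(x,y). \<bar>chi2_tdt b c - chi2_tdt x y\<bar>) ` ({0..2*int N} \<times> {0..2*int N})"
  proof
    fix z assume "z \<in> ?S"
    then obtain x y where z: "z = \<bar>chi2_tdt b c - chi2_tdt x y\<bar>" and nb: "tdt_neighbor N b c x y" by blast
    from nb have "(x,y) \<in> {0..2*int N} \<times> {0..2*int N}" unfolding tdt_neighbor_def by auto
    then show "z \<in> (\<lambda>(x,y). \<bar>chi2_tdt b c - chi2_tdt x y\<bar>) ` ({0..2*int N} \<times> {0..2*int N})"
      using z by force
  qed
  hence fin: "finite ?S" by (rule finite_subset) auto
  have "\<bar>chi2_tdt b c - chi2_tdt b' c'\<bar> \<in> ?S" using assms(1) by blast
  hence "\<bar>chi2_tdt b c - chi2_tdt b' c'\<bar> \<le> LS N b c" unfolding LS_def using fin by (rule Max_ge[rotated])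
  thus ?thesis using assms(2) by linarith
qed

lemma diff_eq:
  fixes b c :: int
  assumes "b + c > 0"
  shows "chi2_tdt b c - chi2_tdt (b-2) (c+2) = (8 * real_of_int (b - c) - 16) / real_of_int (b + c)"
proof -
  have p: "real_of_int (b + c) > 0" using assms by simp
  have "chi2_tdt b c - chi2_tdt (b-2) (c+2) =
     ((real_of_int (b - c))^2 - (real_of_int (b - c) - 4)^2) / real_of_int (b + c)"
    using assms unfolding chi2_tdt_def by (simp add: diff_divide_distrib algebra_simps)
  also have "\<dots> = (8 * real_of_int (b - c) - 16) / real_of_int (b + c)"
    by (simp add: power2_eq_square algebra_simps)
  finally show ?thesis .
qed

lemma diff_eq2:
  fixes b c :: int
  assumes "b + c > 0"
  shows "chi2_tdt b c - chi2_tdt (b+2) (c-2) = (8 * real_of_int (c - b) - 16) / real_of_int (b + c)"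
proof -
  have "chi2_tdt b c - chi2_tdt (b+2) (c-2) =
     ((real_of_int (b - c))^2 - (real_of_int (b - c) + 4)^2) / real_of_int (b + c)"
    using assms unfolding chi2_tdt_def by (simp add: diff_divide_distrib algebra_simps)
  also have "\<dots> = (8 * real_of_int (c - b) - 16) / real_of_int (b + c)"
    by (simp add: power2_eq_square algebra_simps)
  finally show ?thesis .
qed

lemma gt6:
  fixes x y :: int
  assumes "y > 0" "8 * x - 16 > 6 * y"
  shows "(8 * real_of_int x - 16) / real_of_int y > 6"
proof -
  have "real_of_int y > 0" using assms by simp
  moreover have "8 * real_of_int x - 16 > 6 * real_of_int y" using assms(2) by linarith
  ultimately show ?thesis by (simp add: field_simps)
qed

lemma lt6:
  fixes x y :: int
  assumes "y > 0" "8 * x - 16 < - 6 * y"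
  shows "(8 * real_of_int x - 16) / real_of_int y < -6"
proof -
  have "real_of_int y > 0" using assms by simp
  moreover have "8 * real_of_int x - 16 < - 6 * real_of_int y" using assms(2) by linarith
  ultimately show ?thesis by (simp add: field_simps)
qed

theorem lemma2:
  fixes N :: nat and b c :: int
  assumes "N \<ge> 1" and "0 \<le> b" and "0 \<le> c" and "b + c \<le> 2 * int N"
    and "(0 \<le> c \<and> real_of_int c < (real_of_int b - 8) / 7) \<or>
         (2 \<le> b \<and> real_of_int b < (real_of_int c + 8) / 7) \<or>
         (0 \<le> b \<and> real_of_int b < (real_of_int c - 8) / 7) \<or>
         (2 \<le> c \<and> real_of_int c < (real_of_int b + 8) / 7)"
  shows "LS N b c > 6"
proof -
  have "(7*c < b - 8) \<or> (2 \<le> b \<and> 7*b < c + 8) \<or> (7*b < c - 8) \<or> (2 \<le> c \<and> 7*c < b + 8)"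
  proof -
    have "(real_of_int (7*c) < real_of_int (b - 8)) \<or> (2 \<le> b \<and> real_of_int (7*b) < real_of_int (c + 8))
       \<or> (real_of_int (7*b) < real_of_int (c - 8)) \<or> (2 \<le> c \<and> real_of_int (7*c) < real_of_int (b + 8))"
      using assms(5) by (simp add: field_simps) blast
    then show ?thesis by linarith
  qed
  then consider "7*c < b - 8" | "2 \<le> b" "7*b < c + 8" | "7*b < c - 8" | "2 \<le> c" "7*c < b + 8"
    by blast
  then show ?thesis
  proof cases
    case 1
    have n: "tdt_neighbor N b c (b-2) (c+2)" using 1 assms(2-4) unfolding tdt_neighbor_def by auto
    have e: "chi2_tdt b c - chi2_tdt (b-2) (c+2) = (8 * real_of_int (b-c) - 16) / real_of_int (b + c)"
      by (rule diff_eq) (use 1 assms(2,3) in linarith)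
    have "(8 * real_of_int (b-c) - 16) / real_of_int (b + c) > 6"
      by (rule gt6) (use 1 assms(2,3) in \<open>auto simp: algebra_simps\<close>)+
    hence "chi2_tdt b c - chi2_tdt (b-2) (c+2) > 6" using e by simp
    thus ?thesis using LS_gt[OF n] by linarith
  next
    case 2
    have n: "tdt_neighbor N b c (b-2) (c+2)" using 2 assms(2-4) unfolding tdt_neighbor_def by auto
    have e: "chi2_tdt b c - chi2_tdt (b-2) (c+2) = (8 * real_of_int (b-c) - 16) / real_of_int (b + c)"
      by (rule diff_eq) (use 2 assms(2,3) in linarith)
    have "(8 * real_of_int (b-c) - 16) / real_of_int (b + c) < -6"
      by (rule lt6) (use 2 assms(2,3) in \<open>auto simp: algebra_simps\<close>)+
    hence "chi2_tdt b c - chi2_tdt (b-2) (c+2) < -6" using e by simp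
    thus ?thesis using LS_gt[OF n] by linarith
  next
    case 3
    have n: "tdt_neighbor N b c (b+2) (c-2)" using 3 assms(2-4) unfolding tdt_neighbor_def by auto
    have e: "chi2_tdt b c - chi2_tdt (b+2) (c-2) = (8 * real_of_int (c-b) - 16) / real_of_int (b + c)"
      by (rule diff_eq2) (use 3 assms(2,3) in linarith)
    have "(8 * real_of_int (c-b) - 16) / real_of_int (b + c) > 6"
      by (rule gt6) (use 3 assms(2,3) in \<open>auto simp: algebra_simps\<close>)+
    hence "chi2_tdt b c - chi2_tdt (b+2) (c-2) > 6" using e by simp
    thus ?thesis using LS_gt[OF n] by linarith
  next
    case 4
    have n: "tdt_neighbor N b c (b+2) (c-2)" using 4 assms(2-4) unfolding tdt_neighbor_def by auto
    have e: "chi2_tdt b c - chi2_tdt (b+2) (c-2) = (8 * real_of_int (c-b) - 16) / real_of_int (b + c)"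
      by (rule diff_eq2) (use 4 assms(2,3) in linarith)
    have "(8 * real_of_int (c-b) - 16) / real_of_int (b + c) < -6"
      by (rule lt6) (use 4 assms(2,3) in \<open>auto simp: algebra_simps\<close>)+
    hence "chi2_tdt b c - chi2_tdt (b+2) (c-2) < -6" using e by simp
    thus ?thesis using LS_gt[OF n] by linarith
  qed
qed

end
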